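(* Let $\sigma$ be a 2-structure and $X\subsetneq V(\sigma)$ with $\sigma[X]$ prime; write $\overline{X}=V(\sigma)\setminus X$. Suppose Statement (S5) holds (there is no $Y\subseteq\overline{X}$ with $|Y|=5$ and $\sigma[X\cup Y]$ prime). Then for each connected component $C$ of the outside graph $\Gamma_{(\sigma,\overline{X})}$, $P_5\not\leq C$.
   Context: A 2-structure $\sigma$ consists of a vertex set $V(\sigma)$ and an equivalence relation $\equiv_\sigma$ on ordered pairs of distinct vertices; $\sigma[W]$ is the induced 2-structure on $W$. A module is a set $M$ such that for all $x,y\in M$ and $v\notin M$, $(x,v)\equiv_\sigma(y,v)$ and $(v,x)\equiv_\sigma(v,y)$; $\sigma$ is prime if $|V(\sigma)|\geq3$ and its only modules are $\emptyset$, $V(\sigma)$ and singletons. The outside graph $\Gamma_{(\sigma,\overline{X})}$ has vertex set $\overline{X}$ and edges the 2-element sets $Y\subseteq\overline{X}$ with $\sigma[X\cup Y]$ prime. $P_5$ is the path on 5 vertices; $G\leq H$ means $G$ is isomorphic to an induced subgraph of $H$. *)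

theory Defs
  imports Main
begin

definition pairs2 :: "'a set \<Rightarrow> ('a \<times> 'a) set" where
  "pairs2 V = {(x, y). x \<in> V \<and> y \<in> V \<and> x \<noteq> y}"

definition two_structure :: "'a set \<Rightarrow> (('a \<times> 'a) \<times> ('a \<times> 'a)) set \<Rightarrow> bool" where
  "two_structure V R \<longleftrightarrow> equiv (pairs2 V) R"

definition induced2 :: "(('a \<times> 'a) \<times> ('a \<times> 'a)) set \<Rightarrow> 'a set \<Rightarrow> (('a \<times> 'a) \<times> ('a \<times> 'a)) set" where
  "induced2 R W = R \<inter> (pairs2 W \<times> pairs2 W)"

definition is_module :: "'a set \<Rightarrow> (('a \<times> 'a) \<times> ('a \<times> 'a)) set \<Rightarrow> 'a set \<Rightarrow> bool" where
  "is_module V R M \<longleftrightarrow> M \<subseteq> V \<and>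
     (\<forall>x\<in>M. \<forall>y\<in>M. \<forall>v\<in>V - M. ((x, v), (y, v)) \<in> R \<and> ((v, x), (v, y)) \<in> R)"

definition prime2 :: "'a set \<Rightarrow> (('a \<times> 'a) \<times> ('a \<times> 'a)) set \<Rightarrow> bool" where
  "prime2 V R \<longleftrightarrow> (infinite V \<or> card V \<ge> 3) \<and>
     (\<forall>M. is_module V R M \<longrightarrow> M = {} \<or> M = V \<or> (\<exists>x. M = {x}))"

text \<open>Outside graph Gamma_(sigma, V - X): vertices V - X, edges the 2-subsets Y of
V - X with sigma[X \<union> Y] prime. Graphs are given by a vertex set and a set of 2-element edges.\<close>
definition outside_edges :: "'a set \<Rightarrow> (('a \<times> 'a) \<times> ('a \<times> 'a)) set \<Rightarrow> 'a set \<Rightarrow> 'a set set" where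
  "outside_edges V R X = {Y. Y \<subseteq> V - X \<and> card Y = 2 \<and> prime2 (X \<union> Y) (induced2 R (X \<union> Y))}"

definition adj_rel :: "'a set \<Rightarrow> 'a set set \<Rightarrow> ('a \<times> 'a) set" where
  "adj_rel VG EG = {(x, y). x \<in> VG \<and> y \<in> VG \<and> {x, y} \<in> EG}"

text \<open>C is (the vertex set of) a connected component of graph (VG, EG);
the component as a graph is the induced subgraph (C, induced_edges EG C).\<close>
definition is_component :: "'a set \<Rightarrow> 'a set set \<Rightarrow> 'a set \<Rightarrow> bool" where
  "is_component VG EG C \<longleftrightarrow> (\<exists>u\<in>VG. C = {v. (u, v) \<in> (adj_rel VG EG)\<^sup>*})"

definition induced_edges :: "'a set set \<Rightarrow> 'a set \<Rightarrow> 'a set set" where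
  "induced_edges EG C = {e \<in> EG. e \<subseteq> C}"

text \<open>G \<le> H: G is isomorphic to an induced subgraph of H.\<close>
definition induced_sub :: "'a set \<Rightarrow> 'a set set \<Rightarrow> 'b set \<Rightarrow> 'b set set \<Rightarrow> bool" where
  "induced_sub VG EG VH EH \<longleftrightarrow> (\<exists>f. inj_on f VG \<and> f ` VG \<subseteq> VH \<and>
     (\<forall>x\<in>VG. \<forall>y\<in>VG. x \<noteq> y \<longrightarrow> ({x, y} \<in> EG \<longleftrightarrow> {f x, f y} \<in> EH)))"

definition path_V :: "nat \<Rightarrow> nat set" where
  "path_V n = {0..<n}"

definition path_E :: "nat \<Rightarrow> nat set set" where
  "path_E n = {{i, Suc i} | i. Suc i < n}"

end

theory Submission
  imports Defs
begin

lemma mod_restrict: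
  assumes "is_module Z (induced2 R Z) M" "W \<subseteq> Z"
  shows "is_module W (induced2 R W) (M \<inter> W)"
  using assms unfolding is_module_def induced2_def pairs2_def by blast

lemma prime_mod:
  "prime2 W R' \<Longrightarrow> is_module W R' N \<Longrightarrow> N = {} \<or> N = W \<or> (\<exists>x. N = {x})"
  by (simp add: prime2_def)

lemma prime_two:
  assumes "prime2 X R'" shows "\<exists>x y. x \<in> X \<and> y \<in> X \<and> x \<noteq> y"
proof -
  have h: "infinite X \<or> card X \<ge> 3" using assms by (simp add: prime2_def)
  have "X \<noteq> {}" using h by auto
  then obtain x where x: "x \<in> X" by blast
  have "X \<noteq> {x}" using h by auto
  then obtain y where "y \<in> X" "y \<noteq> x" using x by blast
  then show ?thesis using x by blast
qed

lemma module_R: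
  assumes "is_module Z (induced2 R Z) M" "x \<in> M" "y \<in> M" "v \<in> Z" "v \<notin> M"
  shows "((x, v), (y, v)) \<in> R" "((v, x), (v, y)) \<in> R"
  using assms unfolding is_module_def induced2_def by auto

lemma swap:
  assumes ts: "two_structure V R" and ZV: "Z \<subseteq> V"
    and modM: "is_module Z (induced2 R Z) M"
    and pM: "p \<in> M" and cM: "c \<in> M" and bZ: "b \<in> Z - M"
    and XZ: "X \<subseteq> Z" and XM: "X \<inter> M = {}"
    and pr: "prime2 (X \<union> {p, b}) (induced2 R (X \<union> {p, b}))"
  shows "prime2 (X \<union> {c, b}) (induced2 R (X \<union> {c, b}))"
proof -
  have eq: "equiv (pairs2 V) R" using ts by (simp add: two_structure_def)
  have refl: "\<And>u. u \<in> pairs2 V \<Longrightarrow> (u, u) \<in> R" using eq by (simp add: equiv_def refl_on_def)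
  have sy: "\<And>u v. (u, v) \<in> R \<Longrightarrow> (v, u) \<in> R" using eq by (meson equiv_def symD)
  have tr: "\<And>u v w. (u, v) \<in> R \<Longrightarrow> (v, w) \<in> R \<Longrightarrow> (u, w) \<in> R" using eq by (meson equiv_def transD)
  have pZ: "p \<in> Z" and cZ: "c \<in> Z" using modM pM cM unfolding is_module_def by auto
  define W where "W = insert b X"
  define A where "A = insert p W"
  define B where "B = insert c W"
  have pW: "p \<notin> W" using pM bZ XM W_def by auto
  have cW: "c \<notin> W" using cM bZ XM W_def by auto
  have WZ: "W \<subseteq> Z - M" using bZ XZ XM W_def by auto
  have A_eq: "X \<union> {p, b} = A" and B_eq: "X \<union> {c, b} = B" by (auto simp: A_def B_def W_def)
  define g where "g = (\<lambda>x. if x = p then c else x)"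
  have gA: "g ` A = B" by (auto simp: g_def A_def B_def pW)
  have K: "((x, y), (g x, g y)) \<in> R" if "x \<in> A" "y \<in> A" "x \<noteq> y" for x y
  proof (cases "x = p")
    case True
    then have "y \<in> W" "y \<noteq> p" using that A_def by auto
    then have "y \<in> Z - M" using WZ by auto
    then have "((p, y), (c, y)) \<in> R" using module_R[OF modM pM cM] by blast
    then show ?thesis using True \<open>y \<noteq> p\<close> by (simp add: g_def)
  next
    case False
    show ?thesis
    proof (cases "y = p")
      case True
      then have "x \<in> W" using that A_def False by auto
      then have "x \<in> Z - M" using WZ by auto
      then have "((x, p), (x, c)) \<in> R" using module_R[OF modM pM cM] by blast
      then show ?thesis using True False by (simp add: g_def)
    next
      case False2: False
      have "(x, y) \<in> pairs2 V" using that A_def WZ pZ ZV unfolding pairs2_def by auto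
      then show ?thesis using refl False False2 by (simp add: g_def)
    qed
  qed
  show ?thesis unfolding B_eq prime2_def
  proof (intro conjI allI impI)
    have "infinite A \<or> card A \<ge> 3" using pr unfolding A_eq prime2_def by blast
    then show "infinite B \<or> card B \<ge> 3" 
    proof (cases "finite W")
      case True
      have "card A = card B" using True pW cW by (simp add: A_def B_def)
      moreover have "finite A" using True by (simp add: A_def)
      moreover have "card A \<ge> 3" using \<open>finite A\<close> \<open>infinite A \<or> card A \<ge> 3\<close> by blast
      ultimately have "card B \<ge> 3" by linarith
      then show ?thesis by blast
    next
      case False
      then show ?thesis by (simp add: B_def)
    qed
  next
    fix N assume modN: "is_module B (induced2 R B) N"
    define N' where "N' = {x \<in> A. g x \<in> N}"
    have gmap: "\<And>x. x \<in> A \<Longrightarrow> g x \<in> B" using gA by blast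
    have "is_module A (induced2 R A) N'"
      unfolding is_module_def
    proof (intro conjI ballI)
      show "N' \<subseteq> A" by (simp add: N'_def)
    next
      fix x y v assume x: "x \<in> N'" and y: "y \<in> N'" and v: "v \<in> A - N'"
      have xA: "x \<in> A" and yA: "y \<in> A" and gx: "g x \<in> N" and gy: "g y \<in> N"
        using x y by (auto simp: N'_def)
      have vA: "v \<in> A" and gv: "g v \<notin> N" using v by (auto simp: N'_def)
      have gvB: "g v \<in> B - N" using gmap vA gv by auto
      have xv: "x \<noteq> v" "y \<noteq> v" using x y v by auto
      have m1: "((g x, g v), (g y, g v)) \<in> R" and m2: "((g v, g x), (g v, g y)) \<in> R"
        using module_R[OF modN gx gy] gvB by blast+
      have "((x, v), (y, v)) \<in> R"
        using tr[OF K[OF xA vA xv(1)] tr[OF m1 sy[OF K[OF yA vA xv(2)]]]] .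
      moreover have "((v, x), (v, y)) \<in> R"
        using tr[OF K[OF vA xA] tr[OF m2 sy[OF K[OF vA yA]]]] xv by auto
      ultimately show "((x, v), y, v) \<in> induced2 R A" "((v, x), v, y) \<in> induced2 R A"
        using xA yA vA xv unfolding induced2_def pairs2_def by auto
    qed
    then have triv: "N' = {} \<or> N' = A \<or> (\<exists>x. N' = {x})"
      using pr A_eq by (simp add: prime2_def)
    have NB: "N \<subseteq> B" using modN by (simp add: is_module_def)
    have Ng: "N = g ` N'"
    proof
      show "g ` N' \<subseteq> N" by (auto simp: N'_def)
    next
      show "N \<subseteq> g ` N'"
      proof
        fix n assume n: "n \<in> N"
        show "n \<in> g ` N'"
        proof (cases "n = c")
          case True
          then have "g p = n" "p \<in> N'" using n by (auto simp: g_def N'_def A_def)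
          then show ?thesis by force
        next
          case False
          then have "n \<in> W" using n NB B_def by auto
          then have "g n = n" "n \<in> N'" using n pW by (auto simp: g_def N'_def A_def)
          then show ?thesis by force
        qed
      qed
    qed
    show "N = {} \<or> N = B \<or> (\<exists>x. N = {x})"
      
    proof -
      { assume "N' = {}" then have ?thesis using Ng by simp }
      moreover { assume "N' = A" then have ?thesis using Ng gA by simp }
      moreover { fix x assume "N' = {x}" then have ?thesis using Ng by simp }
      ultimately show ?thesis using triv by blast
    qed
  qed
qed

lemma two_not_single: "u \<in> S \<Longrightarrow> v \<in> S \<Longrightarrow> u \<noteq> v \<Longrightarrow> \<not>(\<exists>y. S = {y})"
  by auto

lemma p5_twins:
  assumes adj: "\<And>k. k<4 \<Longrightarrow> \<not>(P k \<and> P (Suc k))"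
    and tw: "\<And>i j k. i<5 \<Longrightarrow> j<5 \<Longrightarrow> k<5 \<Longrightarrow> P i \<Longrightarrow> P j \<Longrightarrow> \<not> P k \<Longrightarrow> Ed i k \<Longrightarrow> Ed j k"
    and ed: "\<And>i j. i<5 \<Longrightarrow> j<5 \<Longrightarrow> i\<noteq>j \<Longrightarrow> Ed i j \<longleftrightarrow> (j = Suc i \<or> i = Suc j)"
    and "i<5" "j<5" "i\<noteq>j" "P i" "P j"
  shows False
proof -
  have a0: "\<not>(P 0 \<and> P 1)" and a1: "\<not>(P 1 \<and> P 2)" and a2: "\<not>(P 2 \<and> P 3)" and a3: "\<not>(P 3 \<and> P 4)"
    using adj[of 0] adj[of 1] adj[of 2] adj[of 3] by (simp_all add: numeral_eq_Suc)
  have e: "Ed 0 1" "Ed 1 2" "Ed 2 3" "Ed 3 4" "\<not> Ed 0 3" "\<not> Ed 0 4" "\<not> Ed 4 1" "\<not> Ed 3 0" "\<not> Ed 4 0"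
    "Ed 1 0" "Ed 2 1" "\<not> Ed 0 3"
    by (simp_all add: ed numeral_eq_Suc)
  have c02: "P 0 \<Longrightarrow> P 2 \<Longrightarrow> False" using tw[of 2 0 3] a2 e by auto
  have c03: "P 0 \<Longrightarrow> P 3 \<Longrightarrow> False" using tw[of 3 0 4] a3 e by auto
  have c04: "P 0 \<Longrightarrow> P 4 \<Longrightarrow> False" using tw[of 0 4 1] a0 e by auto
  have c13: "P 1 \<Longrightarrow> P 3 \<Longrightarrow> False" using tw[of 1 3 0] a0 e by auto
  have c14: "P 1 \<Longrightarrow> P 4 \<Longrightarrow> False" using tw[of 1 4 0] a0 e by auto
  have c24: "P 2 \<Longrightarrow> P 4 \<Longrightarrow> False" using tw[of 2 4 1] a1 e by auto
  have "i = 0 \<or> i = 1 \<or> i = 2 \<or> i = 3 \<or> i = 4" "j = 0 \<or> j = 1 \<or> j = 2 \<or> j = 3 \<or> j = 4"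
    using assms(4,5) by auto
  then show False using assms(6-8) c02 c03 c04 c13 c14 c24 a0 a1 a2 a3 by auto
qed

lemma core:
  assumes ts: "two_structure V R" and XV: "X \<subseteq> V" and pX: "prime2 X (induced2 R X)"
    and aY: "\<And>i. i<5 \<Longrightarrow> a i \<in> V - X" and inj: "inj_on a {0..<5}"
    and E: "\<And>i j. i<5 \<Longrightarrow> j<5 \<Longrightarrow> i\<noteq>j \<Longrightarrow>
      prime2 (X \<union> {a i, a j}) (induced2 R (X \<union> {a i, a j})) \<longleftrightarrow> (j = Suc i \<or> i = Suc j)"
  shows "prime2 (X \<union> a`{0..<5}) (induced2 R (X \<union> a`{0..<5}))"
proof -
  define Z where "Z = X \<union> a`{0..<5}"
  have ZV: "Z \<subseteq> V" using XV aY by (auto simp: Z_def)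
  have XZ: "X \<subseteq> Z" by (simp add: Z_def)
  obtain x1 x2 where x12: "x1 \<in> X" "x2 \<in> X" "x1 \<noteq> x2" using prime_two[OF pX] by blast
  have edge: "prime2 (X \<union> {a k, a (Suc k)}) (induced2 R (X \<union> {a k, a (Suc k)}))" if "k<4" for k
    using E[of k "Suc k"] that by auto
  have WZ: "X \<union> {a i, a j} \<subseteq> Z" if "i<5" "j<5" for i j using that by (auto simp: Z_def)
  have ainj: "a i \<noteq> a j" if "i<5" "j<5" "i \<noteq> j" for i j
    using inj that unfolding inj_on_def by auto
  have cardZ: "infinite Z \<or> card Z \<ge> 3"
  proof (cases "finite Z")
    case True
    then have "finite X" using XZ finite_subset by blast
    then have "card X \<ge> 3" using pX by (simp add: prime2_def)
    moreover have "card X \<le> card Z" using True XZ card_mono by blast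
    ultimately show ?thesis by linarith
  qed simp
  show ?thesis unfolding Z_def[symmetric] prime2_def
  proof (intro conjI allI impI)
    show "infinite Z \<or> card Z \<ge> 3" by (rule cardZ)
  next
    fix M assume modM: "is_module Z (induced2 R Z) M"
    have MZ: "M \<subseteq> Z" using modM by (simp add: is_module_def)
    have restr: "M \<inter> (X \<union> {a k, a (Suc k)}) = {} \<or> M \<inter> (X \<union> {a k, a (Suc k)}) = X \<union> {a k, a (Suc k)}
        \<or> (\<exists>y. M \<inter> (X \<union> {a k, a (Suc k)}) = {y})" if "k<4" for k
      using prime_mod[OF edge[OF that] mod_restrict[OF modM WZ]] that by simp
    have MX: "M \<inter> X = {} \<or> M \<inter> X = X \<or> (\<exists>x. M \<inter> X = {x})"
      using prime_mod[OF pX mod_restrict[OF modM XZ]] by simp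
    show "M = {} \<or> M = Z \<or> (\<exists>x. M = {x})"
    proof (rule ccontr)
      assume nt: "\<not> (M = {} \<or> M = Z \<or> (\<exists>x. M = {x}))"
      from MX consider (A) "M \<inter> X = X" | (B) x where "M \<inter> X = {x}" | (C) "M \<inter> X = {}" by blast
      then show False
      proof cases
        case A
        have both: "a k \<in> M \<and> a (Suc k) \<in> M" if "k<4" for k
        proof -
          let ?W = "X \<union> {a k, a (Suc k)}"
          have "x1 \<in> M \<inter> ?W" using A x12 by blast
          then have "M \<inter> ?W \<noteq> {}" by blast
          moreover have "x1 \<in> M \<inter> ?W" "x2 \<in> M \<inter> ?W" using A x12 by blast+
          then have "\<not>(\<exists>y. M \<inter> ?W = {y})" using x12(3) by (rule two_not_single)
          ultimately have "M \<inter> ?W = ?W" using restr[OF that] by blast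
          then show ?thesis by blast
        qed
        have "a i \<in> M" if "i<5" for i
        proof (cases "i < 4")
          case True then show ?thesis using both by blast
        next
          case False then have "i = Suc 3" using that by simp
          then show ?thesis using both[of 3] by simp
        qed
        then have "Z \<subseteq> M" using A by (auto simp: Z_def)
        then show False using nt MZ by blast
      next
        case (B x)
        have none: "a k \<notin> M \<and> a (Suc k) \<notin> M" if "k<4" for k
        proof -
          let ?W = "X \<union> {a k, a (Suc k)}"
          have "M \<inter> ?W \<noteq> {}" using B by blast
          moreover have "M \<inter> ?W \<noteq> ?W"
          proof
            assume "M \<inter> ?W = ?W"
            then have "x1 \<in> M \<inter> X" "x2 \<in> M \<inter> X" using x12 by blast+
            then show False using B x12(3) by simp
          qed
          ultimately obtain y where y: "M \<inter> ?W = {y}" using restr[OF \<open>k<4\<close>] by blast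
          moreover have "x \<in> M \<inter> ?W" using B by blast
          ultimately have "y = x" by simp
          moreover have "a k \<notin> X" "a (Suc k) \<notin> X" using aY that by auto
          moreover have "a k \<in> ?W" "a (Suc k) \<in> ?W" by auto
          ultimately show ?thesis using y B by auto
        qed
        have "a i \<notin> M" if "i<5" for i
        proof (cases "i < 4")
          case True then show ?thesis using none by blast
        next
          case False then have "i = Suc 3" using that by simp
          then show ?thesis using none[of 3] by simp
        qed
        then have "M \<subseteq> X" using MZ by (auto simp: Z_def)
        then have "M = {x}" using B by blast
        then show False using nt by blast
      next
        case C
        have MY: "M \<subseteq> a ` {0..<5}" using MZ C by (auto simp: Z_def)
        have XM: "X \<inter> M = {}" using C by blast
        have "M \<noteq> {}" using nt by blast
        then obtain m1 where m1: "m1 \<in> M" by blast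
        have "M \<noteq> {m1}" using nt by blast
        then obtain m2 where m2: "m2 \<in> M" "m2 \<noteq> m1" using m1 by blast
        have m: "m1 \<in> M" "m2 \<in> M" "m1 \<noteq> m2" using m1 m2 by auto
        have "m1 \<in> a ` {0..<5}" "m2 \<in> a ` {0..<5}" using MY m by auto
        then obtain i j where ij: "i<5" "j<5" "a i = m1" "a j = m2" by auto
        have adj: "\<not>(a k \<in> M \<and> a (Suc k) \<in> M)" if "k<4" for k
        proof
          assume h: "a k \<in> M \<and> a (Suc k) \<in> M"
          let ?W = "X \<union> {a k, a (Suc k)}"
          have ne: "a k \<noteq> a (Suc k)" using ainj[of k "Suc k"] that by simp
          have h1: "a k \<in> M \<inter> ?W" and h2: "a (Suc k) \<in> M \<inter> ?W" using h by blast+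
          have "M \<inter> ?W \<noteq> {}" using h1 by blast
          moreover have "\<not>(\<exists>y. M \<inter> ?W = {y})" by (rule two_not_single[OF h1 h2 ne])
          moreover have "M \<inter> ?W \<noteq> ?W"
          proof
            assume "M \<inter> ?W = ?W"
            then have "x1 \<in> M \<inter> X" using x12 by blast
            then show False using C by simp
          qed
          ultimately show False using restr[OF that] by blast
        qed
        have tw: "prime2 (X \<union> {a j', a k}) (induced2 R (X \<union> {a j', a k}))"
          if "i'<5" "j'<5" "k<5" "a i' \<in> M" "a j' \<in> M" "a k \<notin> M"
             "prime2 (X \<union> {a i', a k}) (induced2 R (X \<union> {a i', a k}))" for i' j' k
        proof (rule swap[OF ts ZV modM that(4) that(5) _ XZ XM that(7)])
          show "a k \<in> Z - M" using that by (auto simp: Z_def)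
        qed
        show False
          by (rule p5_twins[where P = "\<lambda>i. a i \<in> M"
              and Ed = "\<lambda>i j. prime2 (X \<union> {a i, a j}) (induced2 R (X \<union> {a i, a j}))",
              OF adj tw E ij(1) ij(2) _ _ _]) (use ij m in auto)
      qed
    qed
  qed
qed

theorem lemma4p4:
  fixes V X C :: "'a set" and R :: "(('a \<times> 'a) \<times> ('a \<times> 'a)) set"
  assumes "two_structure V R"
    and "X \<subset> V"
    and "prime2 X (induced2 R X)"
    and "\<not> (\<exists>Y. Y \<subseteq> V - X \<and> card Y = 5 \<and> prime2 (X \<union> Y) (induced2 R (X \<union> Y)))"
    and "is_component (V - X) (outside_edges V R X) C"
  shows "\<not> induced_sub (path_V 5) (path_E 5) C (induced_edges (outside_edges V R X) C)"
proof
  assume "induced_sub (path_V 5) (path_E 5) C (induced_edges (outside_edges V R X) C)"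
  then obtain f where inj0: "inj_on f (path_V 5)" and fC0: "f ` (path_V 5) \<subseteq> C"
    and edall: "\<forall>x\<in>path_V 5. \<forall>y\<in>path_V 5. x \<noteq> y \<longrightarrow>
       ({x, y} \<in> path_E 5 \<longleftrightarrow> {f x, f y} \<in> induced_edges (outside_edges V R X) C)"
    unfolding induced_sub_def by (elim exE conjE)
  have inj: "inj_on f {0..<5}" using inj0 by (simp add: path_V_def)
  have fC: "f ` {0..<5} \<subseteq> C" using fC0 by (simp add: path_V_def)
  have ed: "{x, y} \<in> path_E 5 \<longleftrightarrow> {f x, f y} \<in> induced_edges (outside_edges V R X) C"
    if "x \<in> {0..<5}" "y \<in> {0..<5}" "x \<noteq> y" for x y
    using edall that unfolding path_V_def by blast
  obtain u where u: "u \<in> V - X" and Cdef: "C = {v. (u, v) \<in> (adj_rel (V - X) (outside_edges V R X))\<^sup>*}"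
    using assms(5) unfolding is_component_def by blast
  have CV: "C \<subseteq> V - X"
  proof
    fix v assume "v \<in> C"
    then have "(u, v) \<in> (adj_rel (V - X) (outside_edges V R X))\<^sup>*" using Cdef by blast
    then show "v \<in> V - X" using u by (cases rule: rtranclE) (auto simp: adj_rel_def)
  qed
  have aY: "f i \<in> V - X" if "i < 5" for i
  proof -
    have "f i \<in> C" using fC that by auto
    then show ?thesis using CV by blast
  qed
  have E: "prime2 (X \<union> {f i, f j}) (induced2 R (X \<union> {f i, f j})) \<longleftrightarrow> (j = Suc i \<or> i = Suc j)"
    if "i<5" "j<5" "i\<noteq>j" for i j
  proof -
    have fij: "f i \<noteq> f j" using inj that unfolding inj_on_def by auto
    have "{i, j} \<in> path_E 5 \<longleftrightarrow> (j = Suc i \<or> i = Suc j)"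
      using that unfolding path_E_def by (auto simp: doubleton_eq_iff)
    moreover have "{f i, f j} \<in> induced_edges (outside_edges V R X) C \<longleftrightarrow>
        prime2 (X \<union> {f i, f j}) (induced2 R (X \<union> {f i, f j}))"
    proof -
      have "f i \<in> C" "f j \<in> C" using fC that by auto
      then have "{f i, f j} \<subseteq> C" "{f i, f j} \<subseteq> V - X" "card {f i, f j} = 2" using CV fij by auto
      then show ?thesis unfolding induced_edges_def outside_edges_def by blast
    qed
    ultimately show ?thesis using ed[of i j] that by auto
  qed
  have XV: "X \<subseteq> V" using assms(2) by blast
  have pr: "prime2 (X \<union> f`{0..<5}) (induced2 R (X \<union> f`{0..<5}))"
    by (rule core[OF assms(1) XV assms(3) aY inj E])
  moreover have "f`{0..<5} \<subseteq> V - X" using aY by auto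
  moreover have "card (f`{0..<5}) = 5" using card_image[OF inj] by simp
  ultimately have "\<exists>Y. Y \<subseteq> V - X \<and> card Y = 5 \<and> prime2 (X \<union> Y) (induced2 R (X \<union> Y))"
    by blast
  then show False using assms(4) by (rule notE[rotated])
qed

end
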